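(* Let $\mathcal{X}$ be a finite set, let $d\geq 1$, let $H:\mathcal{X}^{d+1}\to\mathbb{R}$ be any function and let $r\in\mathcal{P}_+(\mathcal{X})$. Then there exist functions $\kappa:\mathcal{X}^d\to\mathbb{R}$ and $\delta:\mathcal{X}\to\mathbb{R}$ such that the function \[ w(x_{d+1}|x_{1:d}) = \exp\bigl(H(x_{1:(d+1)})+\kappa(x_{2:(d+1)})-\kappa(x_{1:d})-\delta(x_{d+1})\bigr),\qquad x_{1:(d+1)}\in\mathcal{X}^{d+1}, \] belongs to $\mathcal{W}_d$ and its first-order stationary distribution satisfies $p_w^{(1)}(x_1)=r(x_1)$ for all $x_1\in\mathcal{X}$.
   Context: $\mathcal{P}_+(\mathcal{X})$ denotes the set of strictly positive probability distributions on the finite set $\mathcal{X}$. For $s\le t$, $x_{s:t}$ abbreviates $(x_s,\ldots,x_t)$. A $d$-th-order Markov kernel is a function $w:\mathcal{X}^{d+1}\to[0,\infty)$, written $w(y|x_{1:d})$, with $\sum_{y\in\mathcal{X}}w(y|x_{1:d})=1$ for every $x_{1:d}\in\mathcal{X}^d$; $\mathcal{W}_d$ is the set of strictly positive $d$-th-order Markov kernels. For $w\in\mathcal{W}_d$, its stationary distribution $p_w^{(d)}$ is the unique probability distribution on $\mathcal{X}^d$ satisfying $\sum_{x_1\in\mathcal{X}}p_w^{(d)}(x_{1:d})\,w(x_{d+1}|x_{1:d})=p_w^{(d)}(x_{2:(d+1)})$ for all $x_{2:(d+1)}\in\mathcal{X}^d$ (equivalently, the stationary distribution of the first-order chain on $\mathcal{X}^d$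 moving from $x_{1:d}$ to $x_{2:(d+1)}$ with probability $w(x_{d+1}|x_{1:d})$). The first-order stationary distribution is $p_w^{(1)}(x_1)=\sum_{x_{2:d}}p_w^{(d)}(x_{1:d})$. *)

theory Defs
  imports Complex_Main
begin

text \<open>Tuples x_{1:k} in X^k are lists of length k over a finite type 'a (= X).
A d-th order kernel w(y|x_{1:d}) is represented as w y xs, xs of length d.\<close>

definition tuples :: "nat \<Rightarrow> 'a list set" where
  "tuples k = {xs. length xs = k}"

definition pos_prob :: "('a::finite \<Rightarrow> real) \<Rightarrow> bool" where
  "pos_prob r \<longleftrightarrow> (\<forall>x. r x > 0) \<and> (\<Sum>x\<in>UNIV. r x) = 1"

definition in_W :: "nat \<Rightarrow> ('a::finite \<Rightarrow> 'a list \<Rightarrow> real) \<Rightarrow> bool" where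
  "in_W d w \<longleftrightarrow> (\<forall>xs\<in>tuples d. \<forall>y. w y xs > 0) \<and>
                  (\<forall>xs\<in>tuples d. (\<Sum>y\<in>UNIV. w y xs) = 1)"

text \<open>p is a stationary distribution (on X^d) of the d-th order kernel w:
 sum_{x_1} p(x_{1:d}) w(x_{d+1}|x_{1:d}) = p(x_{2:(d+1)}).
 Here ys = x_{2:(d+1)}, x_{1:d} = x # butlast ys, x_{d+1} = last ys.\<close>
definition stationary :: "nat \<Rightarrow> ('a::finite \<Rightarrow> 'a list \<Rightarrow> real) \<Rightarrow> ('a list \<Rightarrow> real) \<Rightarrow> bool" where
  "stationary d w p \<longleftrightarrow>
     (\<forall>xs\<in>tuples d. p xs \<ge> 0) \<and> (\<Sum>xs\<in>tuples d. p xs) = 1 \<and>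
     (\<forall>ys\<in>tuples d. (\<Sum>x\<in>UNIV. p (x # butlast ys) * w (last ys) (x # butlast ys)) = p ys)"

definition first_marginal :: "nat \<Rightarrow> ('a list \<Rightarrow> real) \<Rightarrow> 'a \<Rightarrow> real" where
  "first_marginal d p x1 = (\<Sum>zs\<in>tuples (d - 1). p (x1 # zs))"

definition exp_kernel :: "('a list \<Rightarrow> real) \<Rightarrow> ('a list \<Rightarrow> real) \<Rightarrow> ('a \<Rightarrow> real) \<Rightarrow> 'a \<Rightarrow> 'a list \<Rightarrow> real" where
  "exp_kernel H \<kappa> \<delta> y xs = exp (H (xs @ [y]) + \<kappa> (tl xs @ [y]) - \<kappa> xs - \<delta> y)"

end

theory Submission
  imports Defs "HOL-Analysis.Analysis" "HOL-Real_Asymp.Real_Asymp"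
begin


lemma finite_tuples[simp]: "finite (tuples k :: 'a::finite list set)"
  unfolding tuples_def using finite_lists_length_eq[of "UNIV::'a set" k] by simp

lemma tuples_Suc: "tuples (Suc k) = (\<lambda>(x,zs). x # zs) ` (UNIV \<times> tuples k)"
  unfolding tuples_def by (auto simp: image_iff length_Suc_conv)

lemma sum_tuples_Suc:
  fixes F :: "'a::finite list \<Rightarrow> 'b::comm_monoid_add"
  shows "(\<Sum>xs\<in>tuples (Suc k). F xs) = (\<Sum>x\<in>UNIV. \<Sum>zs\<in>tuples k. F (x # zs))"
proof -
  have inj: "inj_on (\<lambda>(x,zs). x # zs) (UNIV \<times> tuples k)" by (auto simp: inj_on_def)
  have "(\<Sum>xs\<in>tuples (Suc k). F xs) = (\<Sum>p\<in>UNIV \<times> tuples k. F ((\<lambda>(x,zs). x # zs) p))"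
    unfolding tuples_Suc by (rule sum.reindex[OF inj, unfolded comp_def])
  also have "\<dots> = (\<Sum>x\<in>UNIV. \<Sum>zs\<in>tuples k. F (x # zs))"
    by (simp add: sum.cartesian_product case_prod_beta)
  finally show ?thesis .
qed

lemma ent_cont: "continuous_on {0..} (\<lambda>x::real. x * ln x)"
proof -
  have lim: "((\<lambda>x::real. x * ln x) \<longlongrightarrow> 0) (at_right 0)" by real_asymp
  show ?thesis unfolding continuous_on_def
  proof
    fix x :: real assume "x \<in> {0..}"
    show "((\<lambda>x. x * ln x) \<longlongrightarrow> x * ln x) (at x within {0..})"
    proof (cases "x = 0")
      case True
      have "at (0::real) within {0..} = at_right 0"
      proof -
        have "{0::real..} - {0} = {0<..} - {0}" by auto
        then show ?thesis unfolding at_within_def by simp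
      qed
      then show ?thesis using lim True by simp
    next
      case False
      then have "x > 0" using \<open>x \<in> {0..}\<close> by auto
      then have "isCont (\<lambda>x. x * ln x) x" by (intro continuous_intros) auto
      then show ?thesis by (simp add: isCont_def tendsto_within_subset[where S=UNIV])
    qed
  qed
qed

lemma tuples_0[simp]: "tuples 0 = {[]}" unfolding tuples_def by auto

lemma cont_coord[continuous_intros]: "continuous_on S (\<lambda>q. q i :: 'b::topological_space)"
  by (rule continuous_on_subset[OF continuous_on_product_coordinates]) simp

definition Lq :: "('a::finite list \<times> 'a \<Rightarrow> real) \<Rightarrow> 'a list \<Rightarrow> real" where
  "Lq q xs = (\<Sum>y\<in>UNIV. q (xs,y))"
definition Rq :: "('a::finite list \<times> 'a \<Rightarrow> real) \<Rightarrow> 'a list \<Rightarrow> real" where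
  "Rq q ys = (\<Sum>x\<in>UNIV. q (x # butlast ys, last ys))"
definition fmq :: "nat \<Rightarrow> ('a::finite list \<times> 'a \<Rightarrow> real) \<Rightarrow> 'a \<Rightarrow> real" where
  "fmq d q x = (\<Sum>zs\<in>tuples (d-1). Lq q (x # zs))"
definition CC :: "nat \<Rightarrow> ('a::finite \<Rightarrow> real) \<Rightarrow> ('a list \<times> 'a \<Rightarrow> real) set" where
  "CC d r = {q. (\<forall>xs y. xs \<notin> tuples d \<longrightarrow> q (xs,y) = 0) \<and> (\<forall>p. 0 \<le> q p) \<and>
     (\<forall>ys. ys \<in> tuples d \<longrightarrow> Lq q ys = Rq q ys) \<and> (\<forall>x. fmq d q x = r x)}"
definition ent :: "real \<Rightarrow> real" where "ent x = x * ln x"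
definition GG :: "nat \<Rightarrow> ('a::finite list \<Rightarrow> real) \<Rightarrow> ('a list \<times> 'a \<Rightarrow> real) \<Rightarrow> real" where
  "GG d H q = (\<Sum>xs\<in>tuples d. (\<Sum>y\<in>UNIV. q (xs,y) * H (xs@[y]) - ent (q (xs,y))) + ent (Lq q xs))"
definition prodl :: "('a \<Rightarrow> real) \<Rightarrow> 'a list \<Rightarrow> real" where "prodl r xs = prod_list (map r xs)"
definition q1 :: "nat \<Rightarrow> ('a::finite \<Rightarrow> real) \<Rightarrow> ('a list \<times> 'a \<Rightarrow> real)" where
  "q1 d r p = (if fst p \<in> tuples d then prodl r (fst p) * r (snd p) else 0)"

lemma Lq_cont[continuous_intros]: "continuous_on S (\<lambda>q. Lq q xs)"
  unfolding Lq_def by (intro continuous_intros)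
lemma Rq_cont[continuous_intros]: "continuous_on S (\<lambda>q. Rq q xs)"
  unfolding Rq_def by (intro continuous_intros)
lemma fmq_cont[continuous_intros]: "continuous_on S (\<lambda>q. fmq d q x)"
  unfolding fmq_def by (intro continuous_intros)

lemma tuples_len: "xs \<in> tuples k \<longleftrightarrow> length xs = k" by (simp add: tuples_def)

locale M =
  fixes d :: nat and H :: "'a::finite list \<Rightarrow> real" and r :: "'a \<Rightarrow> real"
  assumes d1: "d \<ge> 1" and pr: "pos_prob r"
begin

lemma rpos: "r x > 0" using pr by (simp add: pos_prob_def)
lemma rsum: "(\<Sum>x\<in>UNIV. r x) = 1" using pr by (simp add: pos_prob_def)
lemma rle1: "r x \<le> 1"
  using member_le_sum[of x UNIV r] rpos rsum by (simp add: less_imp_le)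

lemma prodl_pos: "prodl r xs > 0"
  unfolding prodl_def by (induction xs) (simp_all add: rpos)

lemma sum_prodl: "(\<Sum>xs\<in>tuples k. prodl r xs) = 1"
proof (induction k)
  case 0 then show ?case by (simp add: prodl_def)
next
  case (Suc k)
  have "(\<Sum>xs\<in>tuples (Suc k). prodl r xs) = (\<Sum>x\<in>UNIV. r x * (\<Sum>zs\<in>tuples k. prodl r zs))"
    by (simp add: sum_tuples_Suc prodl_def sum_distrib_left)
  then show ?case using Suc rsum by simp
qed

lemma q1_in: "q1 d r \<in> CC d r"
proof -
  have L: "Lq (q1 d r) xs = prodl r xs" if "xs \<in> tuples d" for xs
    using that by (simp add: Lq_def q1_def sum_distrib_left[symmetric] rsum)
  have R: "Rq (q1 d r) ys = prodl r ys" if "ys \<in> tuples d" for ys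
  proof -
    have ne: "ys \<noteq> []" using that d1 by (auto simp: tuples_def)
    have "\<And>x. x # butlast ys \<in> tuples d" using that ne by (auto simp: tuples_def)
    then have "Rq (q1 d r) ys = (\<Sum>x\<in>UNIV. r x * (prodl r (butlast ys) * r (last ys)))"
      by (simp add: Rq_def q1_def prodl_def mult.assoc)
    also have "\<dots> = prodl r (butlast ys) * r (last ys)"
      by (simp add: sum_distrib_right[symmetric] rsum)
    also have "\<dots> = prodl r ys"
      using append_butlast_last_id[OF ne] by (metis prodl_def list.map(1) list.map(2) map_append prod_list.Cons prod_list.Nil prod_list.append mult.right_neutral)
    finally show ?thesis .
  qed
  have F: "fmq d (q1 d r) x = r x" for x
  proof -
    have "\<And>zs. zs \<in> tuples (d-1) \<Longrightarrow> x # zs \<in> tuples d" using d1 by (auto simp: tuples_def)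
    then have "fmq d (q1 d r) x = (\<Sum>zs\<in>tuples (d-1). r x * prodl r zs)"
      unfolding fmq_def by (intro sum.cong refl) (simp add: L prodl_def)
    then show ?thesis by (simp add: sum_distrib_left[symmetric] sum_prodl)
  qed
  have nn: "0 \<le> q1 d r p" for p
    using prodl_pos[of "fst p"] rpos[of "snd p"] by (simp add: q1_def)
  show ?thesis unfolding CC_def using L R F prodl_pos rpos
    by (auto simp: q1_def intro!: mult_nonneg_nonneg less_imp_le)
qed

lemma CC_le1: "q \<in> CC d r \<Longrightarrow> q p \<le> 1"
proof -
  assume q: "q \<in> CC d r"
  obtain xs y where p: "p = (xs,y)" by (cases p)
  show ?thesis
  proof (cases "xs \<in> tuples d")
    case False then show ?thesis using q p by (auto simp: CC_def)
  next
    case True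
    then obtain x zs where xs: "xs = x # zs" and zs: "zs \<in> tuples (d-1)"
      using d1 by (cases xs) (auto simp: tuples_def)
    have nn: "\<And>p. 0 \<le> q p" using q by (auto simp: CC_def)
    have "q p \<le> Lq q xs" unfolding Lq_def p using nn
      by (intro member_le_sum) auto
    also have "\<dots> \<le> fmq d q x" unfolding fmq_def xs using zs nn
      by (intro member_le_sum[of zs _ "\<lambda>zs. Lq q (x # zs)"]) (auto simp: Lq_def intro: sum_nonneg)
    also have "\<dots> = r x" using q by (auto simp: CC_def)
    finally show ?thesis using rle1[of x] by simp
  qed
qed

lemma CC_compact: "compact (CC d r)"
proof -
  define S where "S = (\<lambda>p::'a list \<times> 'a. if fst p \<in> tuples d then {0..1::real} else {0})"
  have "compactin (product_topology (\<lambda>_. euclidean) UNIV) (PiE UNIV S)"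
    unfolding compactin_PiE by (auto simp: S_def)
  then have cB: "compact (PiE UNIV S)" by (simp add: euclidean_product_topology)
  have sub: "CC d r \<subseteq> PiE UNIV S"
  proof
    fix q assume q: "q \<in> CC d r"
    show "q \<in> PiE UNIV S" using q CC_le1[OF q]
      by (auto simp: S_def CC_def PiE_iff)
  qed
  have cl: "closed (CC d r)" unfolding CC_def
    by (intro closed_Collect_conj closed_Collect_all closed_Collect_imp closed_Collect_eq
        closed_Collect_le open_Collect_const continuous_intros)
  have "CC d r = PiE UNIV S \<inter> CC d r" using sub by blast
  then show ?thesis using compact_Int_closed[OF cB cl] by simp
qed

lemma GG_cont: "continuous_on (CC d r) (GG d H)"
proof -
  have nn: "\<And>q p. q \<in> CC d r \<Longrightarrow> 0 \<le> q p" by (auto simp: CC_def)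
  have c1: "continuous_on (CC d r) (\<lambda>q. ent (q p))" for p
    unfolding ent_def
    by (rule continuous_on_compose2[OF ent_cont cont_coord]) (auto intro: nn)
  have c2: "continuous_on (CC d r) (\<lambda>q. ent (Lq q xs))" for xs
    unfolding ent_def
  proof (rule continuous_on_compose2[OF ent_cont Lq_cont[of "CC d r" xs]])
    show "(\<lambda>q. Lq q xs) ` CC d r \<subseteq> {0..}"
    proof clarsimp
      fix q assume q: "q \<in> CC d r"
      show "0 \<le> Lq q xs" unfolding Lq_def by (rule sum_nonneg) (rule nn[OF q])
    qed
  qed
  show ?thesis unfolding GG_def by (intro continuous_intros c1 c2)
qed

lemma max_exists: "\<exists>q\<in>CC d r. \<forall>q'\<in>CC d r. GG d H q' \<le> GG d H q"
  using continuous_attains_sup[OF CC_compact _ GG_cont] q1_in by blast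

end


lemma ent_chain:
  assumes "a + t0 * b > 0"
  shows "((\<lambda>t. ent (a + t*b)) has_real_derivative b * (ln (a + t0*b) + 1)) (at t0)"
proof -
  have 1: "((\<lambda>t. a + t*b) has_real_derivative b) (at t0)" by (auto intro!: derivative_eq_intros)
  have 2: "((\<lambda>t. ln (a + t*b)) has_real_derivative b / (a+t0*b)) (at t0)"
    using assms by (auto intro!: derivative_eq_intros)
  have eq: "b * (ln (a + t0*b) + 1) = b * ln (a + t0 * b) + b / (a+t0*b) * (a + t0*b)"
    using assms by (simp add: field_simps)
  show ?thesis unfolding ent_def eq by (rule DERIV_mult[OF 1 2])
qed

lemma Lq_lin: "Lq (\<lambda>p. q p + t * h p) xs = Lq q xs + t * Lq h xs"
  by (simp add: Lq_def sum.distrib sum_distrib_left)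
lemma Rq_lin: "Rq (\<lambda>p. q p + t * h p) xs = Rq q xs + t * Rq h xs"
  by (simp add: Rq_def sum.distrib sum_distrib_left)
lemma fmq_lin: "fmq d (\<lambda>p. q p + t * h p) x = fmq d q x + t * fmq d h x"
  by (simp add: fmq_def Lq_lin sum.distrib sum_distrib_left)

definition Dg :: "nat \<Rightarrow> ('a::finite list \<Rightarrow> real) \<Rightarrow> ('a list \<times> 'a \<Rightarrow> real) \<Rightarrow> ('a list \<times> 'a \<Rightarrow> real) \<Rightarrow> real \<Rightarrow> real" where
  "Dg d H q h t0 = (\<Sum>xs\<in>tuples d. \<Sum>y\<in>UNIV. h (xs,y) * (H (xs@[y]) - ln (q (xs,y) + t0 * h (xs,y))
        + ln (Lq q xs + t0 * Lq h xs)))"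

lemma GG_line: "GG d H (\<lambda>p. q p + t * h p) = (\<Sum>xs\<in>tuples d. (\<Sum>y\<in>UNIV. (q (xs,y) + t * h (xs,y)) * H (xs@[y])
     - ent (q (xs,y) + t * h (xs,y))) + ent (Lq q xs + t * Lq h xs))"
  by (simp add: GG_def Lq_lin)

lemma GG_deriv:
  assumes pos: "\<And>xs y. xs \<in> tuples d \<Longrightarrow> q (xs,y) + t0 * h (xs,y) > 0"
  shows "((\<lambda>t. GG d H (\<lambda>p. q p + t * h p)) has_real_derivative Dg d H q h t0) (at t0)"
proof -
  have Lpos: "Lq q xs + t0 * Lq h xs > 0" if "xs \<in> tuples d" for xs
  proof -
    have "Lq q xs + t0 * Lq h xs = (\<Sum>y\<in>UNIV. q (xs,y) + t0 * h (xs,y))"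
      by (simp add: Lq_def sum.distrib sum_distrib_left)
    also have "\<dots> > 0" by (rule sum_pos) (auto intro: pos[OF that])
    finally show ?thesis .
  qed
  have "((\<lambda>t. \<Sum>xs\<in>tuples d. (\<Sum>y\<in>UNIV. (q (xs,y) + t * h (xs,y)) * H (xs@[y])
     - ent (q (xs,y) + t * h (xs,y))) + ent (Lq q xs + t * Lq h xs)) has_real_derivative
     (\<Sum>xs\<in>tuples d. (\<Sum>y\<in>UNIV. h (xs,y) * H (xs@[y]) - h (xs,y) * (ln (q (xs,y) + t0 * h (xs,y)) + 1))
       + Lq h xs * (ln (Lq q xs + t0 * Lq h xs) + 1))) (at t0)"
    by (intro DERIV_sum DERIV_add DERIV_diff ent_chain pos Lpos)
       (auto intro!: derivative_eq_intros)
  moreover have "(\<Sum>xs\<in>tuples d. (\<Sum>y\<in>UNIV. h (xs,y) * H (xs@[y]) - h (xs,y) * (ln (q (xs,y) + t0 * h (xs,y)) + 1))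
       + Lq h xs * (ln (Lq q xs + t0 * Lq h xs) + 1)) = Dg d H q h t0"
    unfolding Dg_def
    by (intro sum.cong refl) (simp add: Lq_def sum_distrib_right sum_subtractf[symmetric] sum.distrib[symmetric] algebra_simps)
  ultimately show ?thesis by (simp add: GG_line)
qed


definition adm :: "nat \<Rightarrow> ('a::finite list \<times> 'a \<Rightarrow> real) \<Rightarrow> bool" where
  "adm d h \<longleftrightarrow> (\<forall>xs y. xs \<notin> tuples d \<longrightarrow> h (xs,y) = 0) \<and> (\<forall>ys. ys \<in> tuples d \<longrightarrow> Lq h ys = Rq h ys)
      \<and> (\<forall>x. fmq d h x = 0)"

context M begin

lemma stat_zero:
  assumes qC: "q \<in> CC d r" and qmax: "\<forall>q'\<in>CC d r. GG d H q' \<le> GG d H q"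
    and qpos: "\<And>xs y. xs \<in> tuples d \<Longrightarrow> q (xs,y) > 0" and h: "adm d h"
  shows "Dg d H q h 0 = 0"
proof -
  define A where "A = (tuples d :: 'a list set) \<times> (UNIV :: 'a set)"
  have "(replicate d undefined, undefined) \<in> A" by (simp add: A_def tuples_len)
  moreover have "finite A" unfolding A_def by (intro finite_cartesian_product) simp_all
  ultimately have fA: "finite A" "A \<noteq> {}" by auto
  define e where "e = Min ((\<lambda>p. q p / (\<bar>h p\<bar> + 1)) ` A)"
  have epos: "e > 0" unfolding e_def using fA qpos
    by (subst Min_gr_iff) (auto simp: A_def)
  have ele: "e \<le> q p / (\<bar>h p\<bar> + 1)" if "p \<in> A" for p
    unfolding e_def using fA that by (intro Min_le) auto
  have inC: "(\<lambda>p. q p + t * h p) \<in> CC d r" if t: "\<bar>t\<bar> < e" for t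
  proof -
    have nn: "0 \<le> q p + t * h p" for p
    proof (cases "fst p \<in> tuples d")
      case True
      then have pA: "p \<in> A" by (simp add: A_def mem_Times_iff)
      have "\<bar>t * h p\<bar> \<le> e * (\<bar>h p\<bar> + 1)"
        using t by (auto simp: abs_mult intro!: mult_mono)
      also have "\<dots> \<le> q p" using ele[OF pA] by (simp add: pos_le_divide_eq add_pos_nonneg)
      finally show ?thesis by linarith
    next
      case False
      then show ?thesis using qC h by (cases p) (auto simp: CC_def adm_def)
    qed
    show ?thesis using qC h nn unfolding CC_def adm_def
      by (auto simp: Lq_lin Rq_lin fmq_lin)
  qed
  have der: "((\<lambda>t. GG d H (\<lambda>p. q p + t * h p)) has_real_derivative Dg d H q h 0) (at 0)"
    by (rule GG_deriv) (simp add: qpos)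
  show ?thesis
  proof (rule DERIV_local_max[OF der epos], intro allI impI)
    fix t :: real assume "\<bar>0 - t\<bar> < e"
    then have "(\<lambda>p. q p + t * h p) \<in> CC d r" by (intro inC) simp
    then show "GG d H (\<lambda>p. q p + t * h p) \<le> GG d H (\<lambda>p. q p + 0 * h p)"
      using qmax by simp
  qed
qed


lemma adm_CC:
  assumes "q \<in> CC d r" "adm d h" "\<And>p. 0 \<le> q p + t * h p"
  shows "(\<lambda>p. q p + t * h p) \<in> CC d r"
  using assms unfolding CC_def adm_def by (auto simp: Lq_lin Rq_lin fmq_lin)

lemma adm_diff:
  assumes "Q \<in> CC d r" "q \<in> CC d r"
  shows "adm d (\<lambda>p. Q p - q p)"
proof -
  have L: "Lq (\<lambda>p. Q p - q p) xs = Lq Q xs - Lq q xs" for xs by (simp add: Lq_def sum_subtractf)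
  have R: "Rq (\<lambda>p. Q p - q p) xs = Rq Q xs - Rq q xs" for xs by (simp add: Rq_def sum_subtractf)
  have F: "fmq d (\<lambda>p. Q p - q p) x = fmq d Q x - fmq d q x" for x by (simp add: fmq_def L sum_subtractf)
  show ?thesis using assms unfolding adm_def CC_def by (auto simp: L R F)
qed

lemma Lq_le1: assumes "q \<in> CC d r" "xs \<in> tuples d" shows "Lq q xs \<le> 1"
proof -
  obtain x zs where xs: "xs = x # zs" and zs: "zs \<in> tuples (d-1)"
    using d1 assms(2) by (cases xs) (auto simp: tuples_def)
  have nn: "\<And>p. 0 \<le> q p" using assms by (auto simp: CC_def)
  have "Lq q xs \<le> fmq d q x" unfolding fmq_def xs using zs nn
    by (intro member_le_sum[of zs _ "\<lambda>zs. Lq q (x # zs)"]) (auto simp: Lq_def intro: sum_nonneg)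
  also have "\<dots> = r x" using assms by (auto simp: CC_def)
  finally show ?thesis using rle1[of x] by simp
qed

lemma le_Lq: assumes "q \<in> CC d r" shows "q (xs,y) \<le> Lq q xs"
proof -
  have nn: "\<And>p. 0 \<le> q p" using assms by (auto simp: CC_def)
  show ?thesis unfolding Lq_def using nn by (intro member_le_sum) auto
qed

lemma pos_step:
  assumes qC: "q \<in> CC d r" and qmax: "\<forall>q'\<in>CC d r. GG d H q' \<le> GG d H q"
    and xs0: "xs0 \<in> tuples d" and L0: "Lq q xs0 > 0"
  shows "q (xs0,y0) > 0"
proof (rule ccontr)
  assume "\<not> q (xs0,y0) > 0"
  moreover have "q (xs0,y0) \<ge> 0" using qC by (auto simp: CC_def)
  ultimately have q0: "q (xs0,y0) = 0" by simp
  define Q where "Q = q1 d r"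
  have QC: "Q \<in> CC d r" unfolding Q_def by (rule q1_in)
  have Qpos: "Q (xs,y) > 0" if "xs \<in> tuples d" for xs y
    using that prodl_pos rpos by (simp add: Q_def q1_def)
  define h where "h = (\<lambda>p. Q p - q p)"
  have hadm: "adm d h" unfolding h_def by (rule adm_diff[OF QC qC])
  have qnn: "\<And>p. 0 \<le> q p" using qC by (auto simp: CC_def)
  have Qnn: "\<And>p. 0 \<le> Q p" using QC by (auto simp: CC_def)
  have lineC: "(\<lambda>p. q p + t * h p) \<in> CC d r" if "0 \<le> t" "t \<le> 1" for t
  proof (rule adm_CC[OF qC hadm])
    fix p
    have "q p + t * h p = (1 - t) * q p + t * Q p" by (simp add: h_def algebra_simps)
    also have "\<dots> \<ge> 0" using that qnn[of p] Qnn[of p] by (intro add_nonneg_nonneg mult_nonneg_nonneg) auto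
    finally show "0 \<le> q p + t * h p" .
  qed
  have linepos: "q (xs,y) + t * h (xs,y) > 0" if "0 < t" "t \<le> 1" "xs \<in> tuples d" for t xs y
  proof -
    have "q (xs,y) + t * h (xs,y) = (1 - t) * q (xs,y) + t * Q (xs,y)" by (simp add: h_def algebra_simps)
    also have "\<dots> > 0" using that qnn[of "(xs,y)"] Qpos[OF that(3), of y]
      by (intro add_nonneg_pos mult_nonneg_nonneg mult_pos_pos) auto
    finally show ?thesis .
  qed
  define a where "a = Q (xs0,y0)"
  have apos: "a > 0" unfolding a_def using Qpos[OF xs0] .
  define c where "c = Lq q xs0 / 2"
  have cpos: "c > 0" using L0 by (simp add: c_def)
  define lb where "lb = (\<lambda>xs y. h (xs,y) * H (xs@[y]) + (if h (xs,y) < 0 then h (xs,y) * ln (2 / q (xs,y)) else 0))"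
  define S where "S = (\<Sum>xs\<in>tuples d. \<Sum>y\<in>UNIV. lb xs y)"
  have bound: "Dg d H q h t \<ge> S + a * (ln c - ln (t * a))" if t: "0 < t" "t \<le> 1/2" for t
  proof -
    define lb' where "lb' = (\<lambda>xs y. lb xs y + (if xs = xs0 \<and> y = y0 then a * (ln c - ln (t * a)) else 0))"
    have tC: "(\<lambda>p. q p + t * h p) \<in> CC d r" using lineC t by simp
    have tm: "h (xs,y) * (H (xs@[y]) - ln (q (xs,y) + t * h (xs,y)) + ln (Lq q xs + t * Lq h xs)) \<ge> lb' xs y"
      if xs: "xs \<in> tuples d" for xs y
    proof -
      define qt where "qt = q (xs,y) + t * h (xs,y)"
      define Lt where "Lt = Lq q xs + t * Lq h xs"
      have qtpos: "qt > 0" unfolding qt_def using linepos t xs by simp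
      have qtLt: "qt \<le> Lt" unfolding qt_def Lt_def using le_Lq[OF tC, of xs y] by (simp add: Lq_lin)
      have Lt1: "Lt \<le> 1" unfolding Lt_def using Lq_le1[OF tC xs] by (simp add: Lq_lin)
      have Ltpos: "Lt > 0" using qtpos qtLt by simp
      have lnge: "ln Lt - ln qt \<ge> 0" using qtpos qtLt by simp
      have main: "h (xs,y) * (ln Lt - ln qt) \<ge> (if h (xs,y) < 0 then h (xs,y) * ln (2 / q (xs,y)) else 0)"
      proof (cases "h (xs,y) < 0")
        case True
        then have qpos': "q (xs,y) > 0" using Qnn[of "(xs,y)"] by (simp add: h_def)
        have "qt \<ge> q (xs,y) / 2"
        proof -
          have "h (xs,y) \<ge> - q (xs,y)" using Qnn[of "(xs,y)"] by (simp add: h_def)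
          then have "t * h (xs,y) \<ge> t * (- q (xs,y))" using t by (intro mult_left_mono) auto
          moreover have "t * q (xs,y) \<le> q (xs,y) / 2" using t qpos' by (simp add: mult_right_mono[of t "1/2" "q (xs,y)", simplified] )
          ultimately show ?thesis unfolding qt_def by simp
        qed
        then have "ln qt \<ge> ln (q (xs,y) / 2)" using qpos' by simp
        moreover have "ln Lt \<le> 0" using Lt1 Ltpos by simp
        ultimately have "ln Lt - ln qt \<le> ln (2 / q (xs,y))" using qpos' by (simp add: ln_div)
        then show ?thesis using True by (simp add: mult_left_mono_neg)
      next
        case False
        then show ?thesis using lnge by simp
      qed
      have extra: "h (xs,y) * (ln Lt - ln qt) \<ge> a * (ln c - ln (t * a))" if e: "xs = xs0" "y = y0"
      proof -
        have hx: "h (xs,y) = a" using e q0 by (simp add: h_def a_def)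
        have "qt = t * a" using e q0 by (simp add: qt_def h_def a_def)
        moreover have "Lt \<ge> c"
        proof -
          have "Lt = (1 - t) * Lq q xs0 + t * Lq Q xs0" using e by (simp add: Lt_def h_def Lq_def sum_subtractf algebra_simps)
          moreover have "Lq Q xs0 \<ge> 0" unfolding Lq_def using Qnn by (simp add: sum_nonneg)
          moreover have "(1 - t) * Lq q xs0 \<ge> Lq q xs0 / 2" using t L0 by (simp add: mult_right_mono[of "1/2" "1-t" "Lq q xs0", simplified])
          ultimately show ?thesis using t unfolding c_def by (smt (verit) mult_nonneg_nonneg)
        qed
        ultimately show ?thesis using hx apos cpos t by (simp add: mult_left_mono)
      qed
      show ?thesis
      proof (cases "xs = xs0 \<and> y = y0")
        case True
        then have "h (xs,y) \<ge> 0" using apos q0 by (simp add: h_def a_def)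
        then show ?thesis using extra True unfolding lb'_def lb_def qt_def[symmetric] Lt_def[symmetric]
          by (simp add: algebra_simps)
      next
        case False
        have "lb' xs y = h (xs,y) * H (xs@[y]) + (if h (xs,y) < 0 then h (xs,y) * ln (2 / q (xs,y)) else 0)"
          using False unfolding lb'_def lb_def by auto
        moreover have "h (xs,y) * (H (xs@[y]) - ln (q (xs,y) + t * h (xs,y)) + ln (Lq q xs + t * Lq h xs))
            = h (xs,y) * H (xs@[y]) + h (xs,y) * (ln Lt - ln qt)" by (simp add: qt_def Lt_def algebra_simps)
        ultimately show ?thesis using main by linarith
      qed
    qed
    have "(\<Sum>xs\<in>tuples d. \<Sum>y\<in>UNIV. lb' xs y) \<le> Dg d H q h t"
      unfolding Dg_def by (intro sum_mono) (simp add: tm)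
    moreover have "(\<Sum>xs\<in>tuples d. \<Sum>y\<in>UNIV. lb' xs y) = S + a * (ln c - ln (t * a))"
    proof -
      have "(\<Sum>xs\<in>tuples d. \<Sum>y\<in>UNIV. lb' xs y) = S + (\<Sum>xs\<in>tuples d. \<Sum>y\<in>UNIV. (if xs = xs0 \<and> y = y0 then a * (ln c - ln (t * a)) else 0))"
        unfolding lb'_def S_def by (simp add: sum.distrib)
      also have "(\<Sum>xs\<in>tuples d. \<Sum>y\<in>UNIV. (if xs = xs0 \<and> y = y0 then a * (ln c - ln (t * a)) else 0)) = a * (ln c - ln (t * a))"
      proof -
        have "\<And>xs. (\<Sum>y\<in>UNIV. (if xs = xs0 \<and> y = y0 then a * (ln c - ln (t * a)) else 0))
              = (if xs = xs0 then a * (ln c - ln (t * a)) else 0)"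
          by (case_tac "xs = xs0") (simp_all add: sum.delta)
        then show ?thesis using xs0 by (simp add: sum.delta)
      qed
      finally show ?thesis .
    qed
    ultimately show ?thesis by simp
  qed
  define t1 where "t1 = min (1/2) (c * exp (S / a) / (2 * a))"
  have t1pos: "t1 > 0" using apos cpos by (simp add: t1_def)
  have t1le: "t1 \<le> 1/2" by (simp add: t1_def)
  have Dpos: "Dg d H q h t > 0" if t: "0 < t" "t \<le> t1" for t
  proof -
    have "t * a \<le> c * exp (S / a) / 2"
    proof -
      have "t \<le> c * exp (S / a) / (2 * a)" using t by (simp add: t1_def)
      then have "t * (2 * a) \<le> c * exp (S / a)" using apos by (simp add: pos_le_divide_eq)
      then show ?thesis by simp
    qed
    also have "\<dots> < c * exp (S / a)" using cpos by simp
    finally have "ln (t * a) < ln (c * exp (S / a))" using t apos cpos by (intro ln_less_cancel_iff[THEN iffD2]) auto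
    also have "\<dots> = ln c + S / a" using cpos by (simp add: ln_mult)
    finally have "a * (ln c - ln (t * a)) > a * (- S / a)" using apos by (intro mult_strict_left_mono) auto
    then have "S + a * (ln c - ln (t * a)) > 0" using apos by simp
    then show ?thesis using bound[of t] t t1le by simp
  qed
  define phi where "phi = (\<lambda>t. GG d H (\<lambda>p. q p + t * h p))"
  have contphi: "continuous_on {0..t1} phi"
    unfolding phi_def
  proof (rule continuous_on_compose2[OF GG_cont, where f="\<lambda>t. (\<lambda>p. q p + t * h p)"])
    show "continuous_on {0..t1} (\<lambda>t p. q p + t * h p)"
      by (intro continuous_on_coordinatewise_then_product continuous_intros)
    show "(\<lambda>t p. q p + t * h p) ` {0..t1} \<subseteq> CC d r" using lineC t1le by auto
  qed
  have derphi: "(phi has_real_derivative Dg d H q h t) (at t)" if "0 < t" "t < t1" for t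
    unfolding phi_def by (rule GG_deriv) (use linepos that t1le in auto)
  obtain l z where z: "0 < z" "z < t1" and dz: "(phi has_real_derivative l) (at z)"
    and mvt: "phi t1 - phi 0 = (t1 - 0) * l"
    using MVT[OF t1pos contphi] derphi by (metis real_differentiable_def)
  have "l = Dg d H q h z" using DERIV_unique[OF dz derphi[OF z]] .
  then have "l > 0" using Dpos[of z] z by simp
  then have "phi t1 > phi 0" using mvt t1pos by (smt (verit) mult_pos_pos)
  moreover have "phi 0 = GG d H q" by (simp add: phi_def)
  moreover have "phi t1 \<le> GG d H q" using qmax lineC[of t1] t1pos t1le by (simp add: phi_def)
  ultimately show False by simp
qed


lemma sum_Lq: assumes "q \<in> CC d r" shows "(\<Sum>xs\<in>tuples d. Lq q xs) = 1"
proof -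
  have "d = Suc (d-1)" using d1 by simp
  then have "(\<Sum>xs\<in>tuples d. Lq q xs) = (\<Sum>x\<in>UNIV. fmq d q x)"
    unfolding fmq_def by (metis sum_tuples_Suc)
  also have "\<dots> = 1" using assms rsum by (simp add: CC_def)
  finally show ?thesis .
qed

lemma all_pos:
  assumes qC: "q \<in> CC d r" and qmax: "\<forall>q'\<in>CC d r. GG d H q' \<le> GG d H q"
  shows "\<And>xs y. xs \<in> tuples d \<Longrightarrow> q (xs,y) > 0"
proof -
  have nn: "\<And>p. 0 \<le> q p" using qC by (auto simp: CC_def)
  have Lnn: "\<And>xs. 0 \<le> Lq q xs" unfolding Lq_def using nn by (simp add: sum_nonneg)
  obtain xs0 where xs0: "xs0 \<in> tuples d" "Lq q xs0 > 0"
  proof (rule ccontr)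
    assume "\<not> thesis"
    then have "\<forall>xs\<in>tuples d. Lq q xs \<le> 0" using that by force
    then have "(\<Sum>xs\<in>tuples d. Lq q xs) \<le> 0" by (simp add: sum_nonpos)
    then show False using sum_Lq[OF qC] by simp
  qed
  have propg: "Lq q (tl xs @ [y]) > 0" if "xs \<in> tuples d" "Lq q xs > 0" for xs y
  proof -
    have ne: "xs \<noteq> []" using that d1 by (auto simp: tuples_def)
    have "tl xs @ [y] \<in> tuples d" using that ne by (auto simp: tuples_def)
    then have "Lq q (tl xs @ [y]) = Rq q (tl xs @ [y])" using qC by (auto simp: CC_def)
    also have "\<dots> = (\<Sum>x\<in>UNIV. q (x # tl xs, y))" by (simp add: Rq_def)
    also have "\<dots> \<ge> q (hd xs # tl xs, y)" using nn by (intro member_le_sum) auto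
    finally show ?thesis using pos_step[OF qC qmax that, of y] ne by simp
  qed
  have indk: "\<forall>vs. length vs = k \<longrightarrow> Lq q (drop k xs0 @ vs) > 0" if "k \<le> d" for k
    using that
  proof (induction k)
    case 0 then show ?case using xs0 by simp
  next
    case (Suc k)
    show ?case
    proof (intro allI impI)
      fix vs :: "'a list" assume len: "length vs = Suc k"
      then have vs: "vs = butlast vs @ [last vs]" by (metis append_butlast_last_id length_greater_0_conv zero_less_Suc)
      have lb: "length (butlast vs) = k" using len by simp
      have pk: "Lq q (drop k xs0 @ butlast vs) > 0" using Suc lb by simp
      have mem: "drop k xs0 @ butlast vs \<in> tuples d" using xs0 lb Suc.prems by (auto simp: tuples_def)
      have dne: "drop k xs0 \<noteq> []" using xs0 Suc.prems by (auto simp: tuples_def)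
      have "tl (drop k xs0 @ butlast vs) @ [last vs] = drop (Suc k) xs0 @ vs"
        using dne vs by (metis append.assoc drop_Suc tl_append_if tl_drop)
      then show "Lq q (drop (Suc k) xs0 @ vs) > 0" using propg[OF mem pk, of "last vs"] by simp
    qed
  qed
  fix xs :: "'a list" and y :: 'a assume xs: "xs \<in> tuples d"
  have "Lq q xs > 0" using indk[of d] xs0 xs by (auto simp: tuples_def)
  then show "q (xs,y) > 0" using pos_step[OF qC qmax xs] by simp
qed


end

definition ind :: "'b \<Rightarrow> 'b \<Rightarrow> real" where "ind e p = (if p = e then 1 else 0)"
definition hL :: "(real \<times> 'b) list \<Rightarrow> 'b \<Rightarrow> real" where
  "hL L p = sum_list (map (\<lambda>(c,e). c * ind e p) L)"

lemma lin_hL: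
  assumes "F (\<lambda>p. 0) = 0" "\<And>a b. F (\<lambda>p. a p + b p) = F a + F b" "\<And>c a. F (\<lambda>p. c * a p) = c * F a"
  shows "F (hL L) = sum_list (map (\<lambda>(c,e). c * F (ind e)) L)"
proof (induction L)
  case Nil
  have e: "hL [] = (\<lambda>p. 0)" by (simp add: hL_def fun_eq_iff)
  show ?case by (subst e) (simp add: assms(1))
next
  case (Cons a L)
  obtain c e where a: "a = (c,e)" by (cases a)
  have "hL (a # L) = (\<lambda>p. (\<lambda>p. c * ind e p) p + hL L p)" by (simp add: hL_def a fun_eq_iff)
  then have "F (hL (a # L)) = F (\<lambda>p. c * ind e p) + F (hL L)" using assms(2) by simp
  also have "\<dots> = c * F (ind e) + F (hL L)" using assms(3)[of c "ind e"] by simp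
  finally show ?case using Cons a by simp
qed

lemma sum_list_zero': "(\<And>x. x \<in> set L \<Longrightarrow> f x = (0::real)) \<Longrightarrow> sum_list (map f L) = 0"
  by (induction L) auto

fun dpath :: "nat \<Rightarrow> 'a \<Rightarrow> 'a list \<Rightarrow> ('a list \<times> 'a) list" where
  "dpath 0 a0 us = []"
| "dpath (Suc k) a0 us = (us,a0) # dpath k a0 (tl us @ [a0])"

lemma path_len: "us \<noteq> [] \<Longrightarrow> e \<in> set (dpath k a0 us) \<Longrightarrow> length (fst e) = length us \<and> snd e = a0"
proof (induction k arbitrary: us)
  case 0 then show ?case by simp
next
  case (Suc k)
  show ?case
  proof (cases "e = (us,a0)")
    case True then show ?thesis by simp
  next
    case False
    then have "e \<in> set (dpath k a0 (tl us @ [a0]))" using Suc.prems by simp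
    from Suc.IH[OF _ this] show ?thesis using Suc.prems by simp
  qed
qed

definition nxt :: "'a \<Rightarrow> 'a list \<Rightarrow> 'a list" where "nxt a0 v = tl v @ [a0]"

lemma path_end: "length us = n \<Longrightarrow> k \<le> n \<Longrightarrow> (nxt a0 ^^ k) us = drop k us @ replicate k a0"
proof (induction k arbitrary: us n)
  case 0 then show ?case by simp
next
  case (Suc k)
  have "(nxt a0 ^^ Suc k) us = (nxt a0 ^^ k) (tl us @ [a0])" by (simp only: funpow_Suc_right o_apply nxt_def)
  also have "\<dots> = drop k (tl us @ [a0]) @ replicate k a0"
    using Suc.prems by (intro Suc.IH[of _ n]) auto
  also have "\<dots> = drop (Suc k) us @ replicate (Suc k) a0"
    using Suc.prems by (simp add: drop_Suc replicate_append_same[symmetric])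
  finally show ?case .
qed

lemma Lq_ind: "Lq (ind (es,s)) ys = (if es = ys then 1 else 0)"
  by (simp add: Lq_def ind_def)

lemma Rq_ind: assumes "ys \<noteq> []" "es \<noteq> []"
  shows "Rq (ind (es,s)) ys = (if tl es @ [s] = ys then 1 else 0)"
proof -
  have "Rq (ind (es,s)) ys = (\<Sum>x\<in>UNIV. if x = hd es \<and> (butlast ys = tl es \<and> last ys = s) then 1 else 0)"
    unfolding Rq_def ind_def using assms(2) by (intro sum.cong refl) (cases es; auto)
  also have "\<dots> = (if butlast ys = tl es \<and> last ys = s then 1 else 0)"
    by (cases "butlast ys = tl es \<and> last ys = s") (auto simp: sum.delta)
  also have "(butlast ys = tl es \<and> last ys = s) \<longleftrightarrow> tl es @ [s] = ys"
    using assms(1) by (metis append_butlast_last_id butlast_snoc last_snoc)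
  finally show ?thesis by simp
qed

lemma path_flow:
  assumes "ys \<noteq> []" "us \<noteq> []"
  shows "sum_list (map (\<lambda>e. Lq (ind e) ys - Rq (ind e) ys) (dpath k a0 us)) =
         (if us = ys then 1 else 0) - (if (nxt a0 ^^ k) us = ys then 1 else 0)"
  using assms(2)
proof (induction k arbitrary: us)
  case 0 then show ?case by simp
next
  case (Suc k)
  have "tl us @ [a0] \<noteq> []" by simp
  note IH = Suc.IH[OF this]
  have e: "(nxt a0 ^^ Suc k) us = (nxt a0 ^^ k) (tl us @ [a0])" by (simp only: funpow_Suc_right o_apply nxt_def)
  show ?case unfolding e using IH by (simp add: Lq_ind Rq_ind[OF assms(1) Suc.prems])
qed

definition cnt :: "'a list \<Rightarrow> 'a \<Rightarrow> real" where "cnt l x = sum_list (map (\<lambda>u. if u = x then 1 else 0) l)"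

lemma fmq_ind: assumes "length es = d" "d \<ge> 1"
  shows "fmq d (ind (es,s)) x = (if hd es = x then 1 else 0)"
proof -
  obtain e0 es' where es: "es = e0 # es'" using assms by (cases es) auto
  have es': "es' \<in> tuples (d-1)" using assms es by (simp add: tuples_def)
  have "fmq d (ind (es,s)) x = (\<Sum>zs\<in>tuples (d-1). if zs = es' \<and> x = e0 then 1 else 0)"
    unfolding fmq_def Lq_ind es by (intro sum.cong) auto
  also have "\<dots> = (if x = e0 then 1 else 0)" using es' by (cases "x = e0") (simp_all add: sum.delta)
  finally show ?thesis using es by auto
qed

lemma path_cnt:
  assumes "length us = n" "k \<le> n" "\<And>e. e \<in> set (dpath k zz us) \<Longrightarrow> F e = (if hd (fst e) = x then 1 else 0)"
  shows "sum_list (map F (dpath k zz us)) = cnt (take k us) x"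
  using assms
proof (induction k arbitrary: us n)
  case 0 then show ?case by (simp add: cnt_def)
next
  case (Suc k)
  have ne: "us \<noteq> []" using Suc.prems by auto
  have IH: "sum_list (map F (dpath k zz (tl us @ [zz]))) = cnt (take k (tl us @ [zz])) x"
    using Suc.prems by (intro Suc.IH[of _ "n"]) auto
  have "take k (tl us @ [zz]) = take k (tl us)" using Suc.prems by simp
  moreover have "take (Suc k) us = hd us # take k (tl us)" using ne by (cases us) auto
  ultimately show ?case using IH Suc.prems(3)[of "(us,zz)"] by (simp add: cnt_def)
qed

lemma F3_ind: fixes s :: "'a::finite" and es :: "'a list" assumes "es \<in> tuples d"
  shows "(\<Sum>xs\<in>tuples d. \<Sum>y\<in>UNIV. ind (es,s) (xs,y) * g (xs,y)) = g (es,s)"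
proof -
  have "(\<Sum>y\<in>UNIV. ind (es,s) (xs,y) * g (xs,y)) = (if xs = es then g (es,s) else 0)" for xs
  proof (cases "xs = es")
    case True
    have "(\<Sum>y\<in>UNIV. ind (es,s) (xs,y) * g (xs,y)) = (\<Sum>y\<in>UNIV. if y = s then g (es,y) else 0)"
      using True by (intro sum.cong) (auto simp: ind_def)
    then show ?thesis using True by (simp add: sum.delta)
  qed (simp add: ind_def)
  then have "(\<Sum>xs\<in>tuples d. \<Sum>y\<in>UNIV. ind (es,s) (xs,y) * g (xs,y)) = (\<Sum>xs\<in>tuples d. if xs = es then g (es,s) else 0)" by simp
  also have "\<dots> = g (es,s)" using assms by (simp add: sum.delta[OF finite_tuples])
  finally show ?thesis .
qed


lemma Lz_sum:
  fixes F :: "'b \<Rightarrow> real"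
  shows
  "sum_list (map (\<lambda>(c,e). c * F e) (A @ map (Pair 1) P1 @ map (Pair (-1)) P2 @ map (Pair (-1)) P3))
   = sum_list (map (\<lambda>(c,e). c * F e) A) + sum_list (map F P1) - sum_list (map F P2) - sum_list (map F P3)"
proof -
  have "\<And>P c. sum_list (map (\<lambda>(c,e). c * F e) (map (Pair c) P)) = c * sum_list (map F P)"
    by (induct_tac P) (simp_all add: algebra_simps)
  then show ?thesis by simp
qed

lemma cnt_append: "cnt (a @ b) x = cnt a x + cnt b x" by (simp add: cnt_def)
lemma cnt_Cons: "cnt (u # a) x = (if u = x then 1 else 0) + cnt a x" by (simp add: cnt_def)
lemma cnt_rep: "cnt (replicate n u) x = real n * (if u = x then 1 else 0)" by (simp add: cnt_def sum_list_replicate)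

context M begin

lemma lagrange:
  fixes a0 :: 'a
  assumes qC: "q \<in> CC d r" and qmax: "\<forall>q'\<in>CC d r. GG d H q' \<le> GG d H q"
    and xs: "xs \<in> tuples d"
  defines "g \<equiv> \<lambda>p. H (fst p @ [snd p]) - ln (q p) + ln (Lq q (fst p))"
  defines "\<kappa> \<equiv> \<lambda>us. sum_list (map g (dpath d a0 us))"
  defines "\<delta> \<equiv> \<lambda>y. g (replicate d a0, y) + \<kappa> (replicate (d-1) a0 @ [y]) - real d * g (replicate d a0, a0)"
  shows "g (xs,y) = \<kappa> xs - \<kappa> (tl xs @ [y]) + \<delta> y"
proof -
  define od where "od = replicate d a0"
  define om where "om = replicate (d-1) a0 @ [y]"
  define ys' where "ys' = tl xs @ [y]"
  define A where "A = [(1::real,(xs,y)), (-1,(od,y)), (real d,(od,a0))]"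
  define Lz where "Lz = A @ map (Pair 1) (dpath d a0 ys') @ map (Pair (-1)) (dpath d a0 xs) @ map (Pair (-1)) (dpath d a0 om)"
  define h where "h = hL Lz"
  have lxs: "length xs = d" using xs by (simp add: tuples_def)
  have lys: "length ys' = d" "ys' \<noteq> []" using lxs d1 by (auto simp: ys'_def)
  have lom: "length om = d" "om \<noteq> []" using d1 by (auto simp: om_def)
  have lod: "length od = d" "od \<noteq> []" using d1 by (auto simp: od_def)
  have xne: "xs \<noteq> []" using lxs d1 by auto
  have tlod: "tl od = replicate (d-1) a0" by (simp add: od_def)
  have odom: "tl od @ [y] = om" by (simp add: tlod om_def)
  have odod: "tl od @ [a0] = od" using d1 by (cases d) (simp_all add: tlod od_def replicate_append_same)
  have endp: "(nxt a0 ^^ d) us = od" if "length us = d" for us :: "'a list"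
    using path_end[OF that, of d a0] that by (simp add: od_def)
  have pl: "length (fst e) = d" if "e \<in> set (dpath d a0 us)" "length us = d" for e us
  proof -
    have "us \<noteq> []" using that(2) d1 by auto
    then show ?thesis using path_len[OF _ that(1)] that(2) by auto
  qed
  have edges: "fst (snd ce) \<in> tuples d" if "ce \<in> set Lz" for ce
    using that lxs lys lom lod pl by (auto simp: Lz_def A_def tuples_def)
  have zero: "h (xs',y') = 0" if "xs' \<notin> tuples d" for xs' y'
    unfolding h_def hL_def
  proof (rule sum_list_zero')
    fix ce assume "ce \<in> set Lz"
    then have "fst (snd ce) \<in> tuples d" by (rule edges)
    then show "(\<lambda>(c,e). c * ind e (xs',y')) ce = 0" using that by (cases ce) (auto simp: ind_def)
  qed
  have flow: "Lq h ys = Rq h ys" if ys: "ys \<in> tuples d" for ys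
  proof -
    have yne: "ys \<noteq> []" using ys d1 by (auto simp: tuples_def)
    have "Lq h ys - Rq h ys = sum_list (map (\<lambda>(c,e). c * (Lq (ind e) ys - Rq (ind e) ys)) Lz)"
      unfolding h_def by (rule lin_hL) (simp_all add: Lq_def Rq_def sum.distrib sum_distrib_left algebra_simps sum_subtractf)
    also have "\<dots> = 0"
      unfolding Lz_def Lz_sum
      using path_flow[OF yne lys(2), of d a0] path_flow[OF yne xne, of d a0] path_flow[OF yne lom(2), of d a0]
        endp[OF lys(1)] endp[OF lxs] endp[OF lom(1)]
      by (simp add: A_def Lq_ind Rq_ind[OF yne xne] Rq_ind[OF yne lod(2)] odom odod ys'_def)
    finally show ?thesis by simp
  qed
  have marg: "fmq d h x = 0" for x
  proof -
    have "fmq d h x = sum_list (map (\<lambda>(c,e). c * fmq d (ind e) x) Lz)"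
      unfolding h_def by (rule lin_hL) (simp_all add: fmq_def Lq_def sum.distrib sum_distrib_left)
    also have "\<dots> = 0"
    proof -
      have pc: "sum_list (map (\<lambda>e. fmq d (ind e) x) (dpath d a0 us)) = cnt us x" if "length us = d" for us
      proof -
        have "fmq d (ind e) x = (if hd (fst e) = x then 1 else 0)" if e: "e \<in> set (dpath d a0 us)" for e
        proof -
          have "length (fst e) = d" by (rule pl[OF e \<open>length us = d\<close>])
          from fmq_ind[OF this d1, of "snd e" x] show ?thesis by simp
        qed
        from path_cnt[OF that order_refl this] show ?thesis using that by simp
      qed
      have xs_split: "xs = hd xs # tl xs" using xne by simp
      have c1: "cnt xs x = (if hd xs = x then 1 else 0) + cnt (tl xs) x"
        by (subst xs_split) (simp only: cnt_Cons)
      have c2: "cnt ys' x = cnt (tl xs) x + (if y = x then 1 else 0)"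
        by (simp add: ys'_def cnt_append cnt_def)
      have c3: "cnt om x = (real d - 1) * (if a0 = x then 1 else 0) + (if y = x then 1 else 0)"
        using d1 by (simp add: om_def cnt_append cnt_rep) (simp add: cnt_def)
      have v1: "fmq d (ind (xs,y)) x = (if hd xs = x then 1 else 0)" by (rule fmq_ind[OF lxs d1])
      have hod: "hd od = a0" using d1 by (cases d) (simp_all add: od_def)
      have v2: "fmq d (ind (od,s)) x = (if a0 = x then 1 else 0)" for s
        using fmq_ind[OF lod(1) d1, of s x] hod by simp
      have "sum_list (map (\<lambda>(c,e). c * fmq d (ind e) x) Lz) =
        1 * fmq d (ind (xs,y)) x + (-1) * fmq d (ind (od,y)) x + real d * fmq d (ind (od,a0)) x
        + cnt ys' x - cnt xs x - cnt om x"
        unfolding Lz_def Lz_sum using pc[OF lys(1)] pc[OF lxs] pc[OF lom(1)] by (simp add: A_def)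
      also have "\<dots> = 0" unfolding v1 v2 c1 c2 c3 by (simp add: algebra_simps)
      finally show ?thesis .
    qed
    finally show ?thesis .
  qed
  have hadm: "adm d h" unfolding adm_def using zero flow marg by auto
  have qpos: "\<And>xs y. xs \<in> tuples d \<Longrightarrow> q (xs,y) > 0" by (rule all_pos[OF qC qmax])
  have D0: "Dg d H q h 0 = 0" by (rule stat_zero[OF qC qmax qpos hadm])
  have "Dg d H q h 0 = (\<Sum>xs\<in>tuples d. \<Sum>y\<in>UNIV. h (xs,y) * g (xs,y))"
    by (simp add: Dg_def g_def)
  also have "\<dots> = sum_list (map (\<lambda>(c,e). c * (\<Sum>xs\<in>tuples d. \<Sum>y\<in>UNIV. ind e (xs,y) * g (xs,y))) Lz)"
    unfolding h_def by (rule lin_hL) (simp_all add: sum.distrib sum_distrib_left algebra_simps)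
  also have "\<dots> = sum_list (map (\<lambda>(c,e). c * g e) Lz)"
  proof (rule arg_cong[where f=sum_list], rule map_cong[OF refl])
    fix ce assume "ce \<in> set Lz"
    then have "fst (snd ce) \<in> tuples d" by (rule edges)
    then show "(\<lambda>(c,e). c * (\<Sum>xs\<in>tuples d. \<Sum>y\<in>UNIV. ind e (xs,y) * g (xs,y))) ce = (\<lambda>(c,e). c * g e) ce"
      by (cases ce) (auto simp: F3_ind)
  qed
  also have "\<dots> = g (xs,y) - g (od,y) + real d * g (od,a0) + \<kappa> ys' - \<kappa> xs - \<kappa> om"
    unfolding Lz_def Lz_sum by (simp add: A_def \<kappa>_def)
  finally have "g (xs,y) - g (od,y) + real d * g (od,a0) + \<kappa> ys' - \<kappa> xs - \<kappa> om = 0" using D0 by simp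
  then show ?thesis by (simp add: \<delta>_def od_def om_def ys'_def)
qed

end

lemma stat_unique:
  fixes w :: "'a::finite \<Rightarrow> 'a list \<Rightarrow> real"
  assumes d1: "d \<ge> 1" and wpos: "\<And>xs y. xs \<in> tuples d \<Longrightarrow> w y xs > 0"
    and sp: "stationary d w p" and ppos: "\<And>xs. xs \<in> tuples d \<Longrightarrow> p xs > 0"
    and sp': "stationary d w p'"
  shows "\<forall>xs\<in>tuples d. p' xs = p xs"
proof -
  define f where "f = (\<lambda>xs. p' xs / p xs)"
  define T where "T = (tuples d :: 'a list set)"
  have Tne: "replicate d undefined \<in> T" by (simp add: T_def tuples_def)
  have fT: "finite T" by (simp add: T_def)
  define M where "M = Max (f ` T)"
  have "M \<in> f ` T" unfolding M_def using fT Tne by (intro Max_in) auto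
  then obtain ys0 where ys0: "ys0 \<in> T" "f ys0 = M" by auto
  have fle: "f xs \<le> M" if "xs \<in> T" for xs unfolding M_def using fT that by (intro Max_ge) auto
  have eqp: "(\<Sum>x\<in>UNIV. P (x # butlast ys) * w (last ys) (x # butlast ys)) = P ys"
    if "stationary d w P" "ys \<in> T" for P ys using that by (simp add: stationary_def T_def)
  have pred: "f (x # butlast ys) = M" if ys: "ys \<in> T" "f ys = M" for ys x
  proof -
    have ne: "ys \<noteq> []" using ys d1 by (auto simp: T_def tuples_def)
    have mem: "\<And>x. x # butlast ys \<in> T" using ys ne by (auto simp: T_def tuples_def)
    define a where "a = (\<lambda>x. p (x # butlast ys) * w (last ys) (x # butlast ys))"
    have apos: "a x > 0" for x unfolding a_def using mem ppos wpos by (simp add: T_def)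
    have p'eq: "p' (x # butlast ys) = f (x # butlast ys) * p (x # butlast ys)" for x
      using ppos[of "x # butlast ys"] mem[of x] by (simp add: f_def T_def)
    have "(\<Sum>x\<in>UNIV. f (x # butlast ys) * a x) = p' ys"
      using eqp[OF sp' ys(1)] by (simp add: a_def p'eq mult.assoc)
    also have "p' ys = M * p ys" using ys ppos[of ys] by (simp add: f_def T_def divide_eq_eq)
    also have "p ys = (\<Sum>x\<in>UNIV. a x)" using eqp[OF sp ys(1)] by (simp add: a_def)
    finally have "(\<Sum>x\<in>UNIV. (M - f (x # butlast ys)) * a x) = 0"
      by (simp add: sum_distrib_left algebra_simps sum_subtractf)
    moreover have "\<forall>x\<in>UNIV. (M - f (x # butlast ys)) * a x \<ge> 0"
      using fle[OF mem] apos by (simp add: less_imp_le)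
    ultimately have "(M - f (x # butlast ys)) * a x = 0"
      using sum_nonneg_eq_0_iff[of UNIV "\<lambda>x. (M - f (x # butlast ys)) * a x"] by simp
    then show ?thesis using apos[of x] by simp
  qed
  have ind: "\<forall>us. length us = k \<longrightarrow> f (us @ take (d - k) ys0) = M" if "k \<le> d" for k
    using that
  proof (induction k)
    case 0 then show ?case using ys0 by (simp add: T_def tuples_def)
  next
    case (Suc k)
    show ?case
    proof (intro allI impI)
      fix us :: "'a list" assume lu: "length us = Suc k"
      then obtain x us' where us: "us = x # us'" by (cases us) auto
      have lu': "length us' = k" using lu us by simp
      have IH: "f (us' @ take (d - k) ys0) = M" using Suc lu' by simp
      have l0: "length ys0 = d" using ys0 by (simp add: T_def tuples_def)
      have memT: "us' @ take (d - k) ys0 \<in> T" using lu' l0 Suc.prems by (auto simp: T_def tuples_def)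
      have "butlast (us' @ take (d - k) ys0) = us' @ take (d - Suc k) ys0"
        using Suc.prems l0 by (auto simp: butlast_append butlast_take)
      then show "f (us @ take (d - Suc k) ys0) = M" using pred[OF memT IH, of x] us by simp
    qed
  qed
  have allM: "f xs = M" if "xs \<in> T" for xs
    using ind[of d] that by (simp add: T_def tuples_def)
  have p'M: "p' xs = M * p xs" if "xs \<in> T" for xs
    using allM[OF that] ppos[of xs] that by (simp add: f_def T_def divide_eq_eq)
  have "1 = (\<Sum>xs\<in>T. p' xs)" using sp' by (simp add: stationary_def T_def)
  also have "\<dots> = M * (\<Sum>xs\<in>T. p xs)" by (simp add: p'M sum_distrib_left)
  also have "(\<Sum>xs\<in>T. p xs) = 1" using sp by (simp add: stationary_def T_def)
  finally have "M = 1" by simp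
  then show ?thesis using p'M by (simp add: T_def)
qed

context M begin

lemma main:
  shows "\<exists>(\<kappa>::'a list \<Rightarrow> real) (\<delta>::'a \<Rightarrow> real).
           in_W d (exp_kernel H \<kappa> \<delta>) \<and>
           (\<exists>p. stationary d (exp_kernel H \<kappa> \<delta>) p) \<and>
           (\<forall>p. stationary d (exp_kernel H \<kappa> \<delta>) p \<longrightarrow>
                (\<forall>x1. first_marginal d p x1 = r x1))"
proof -
  obtain q where qC: "q \<in> CC d r" and qmax: "\<forall>q'\<in>CC d r. GG d H q' \<le> GG d H q"
    using max_exists by blast
  define a0 :: 'a where "a0 = undefined"
  define g where "g \<equiv> \<lambda>p. H (fst p @ [snd p]) - ln (q p) + ln (Lq q (fst p))"
  define \<kappa> where "\<kappa> \<equiv> \<lambda>us. sum_list (map g (dpath d a0 us))"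
  define \<delta> where "\<delta> \<equiv> \<lambda>y. g (replicate d a0, y) + \<kappa> (replicate (d-1) a0 @ [y]) - real d * g (replicate d a0, a0)"
  have qpos: "\<And>xs y. xs \<in> tuples d \<Longrightarrow> q (xs,y) > 0" by (rule all_pos[OF qC qmax])
  have Lpos: "Lq q xs > 0" if "xs \<in> tuples d" for xs
    unfolding Lq_def by (rule sum_pos) (auto intro: qpos[OF that])
  have wq: "exp_kernel H \<kappa> \<delta> y xs = q (xs,y) / Lq q xs" if xs: "xs \<in> tuples d" for xs y
  proof -
    have "g (xs,y) = \<kappa> xs - \<kappa> (tl xs @ [y]) + \<delta> y"
      unfolding g_def \<kappa>_def \<delta>_def by (rule lagrange[OF qC qmax xs])
    then have "H (xs @ [y]) + \<kappa> (tl xs @ [y]) - \<kappa> xs - \<delta> y = ln (q (xs,y)) - ln (Lq q xs)"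
      by (simp add: g_def)
    then show ?thesis using qpos[OF xs, of y] Lpos[OF xs]
      by (simp add: exp_kernel_def exp_diff)
  qed
  define w where "w = exp_kernel H \<kappa> \<delta>"
  define p where "p = Lq q"
  have wpos: "w y xs > 0" if "xs \<in> tuples d" for xs y
    using wq[OF that] qpos[OF that] Lpos[OF that] by (simp add: w_def)
  have inW: "in_W d w"
    unfolding in_W_def
  proof (intro conjI ballI allI)
    fix xs :: "'a list" and y :: 'a assume xs: "xs \<in> tuples d"
    show "w y xs > 0" by (rule wpos[OF xs])
  next
    fix xs :: "'a list" assume xs: "xs \<in> tuples d"
    have "(\<Sum>y\<in>UNIV. w y xs) = (\<Sum>y\<in>UNIV. q (xs,y)) / Lq q xs"
      by (simp add: w_def wq[OF xs] sum_divide_distrib)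
    then show "(\<Sum>y\<in>UNIV. w y xs) = 1" using Lpos[OF xs] by (simp add: Lq_def)
  qed
  have ppos: "p xs > 0" if "xs \<in> tuples d" for xs using Lpos[OF that] by (simp add: p_def)
  have stat: "stationary d w p"
    unfolding stationary_def
  proof (intro conjI ballI)
    fix xs :: "'a list" assume "xs \<in> tuples d" then show "0 \<le> p xs" using ppos by (simp add: less_imp_le)
  next
    show "(\<Sum>xs\<in>tuples d. p xs) = 1" using sum_Lq[OF qC] by (simp add: p_def)
  next
    fix ys :: "'a list" assume ys: "ys \<in> tuples d"
    have ne: "ys \<noteq> []" using ys d1 by (auto simp: tuples_def)
    have mem: "\<And>x. x # butlast ys \<in> tuples d" using ys ne by (auto simp: tuples_def)
    have "(\<Sum>x\<in>UNIV. p (x # butlast ys) * w (last ys) (x # butlast ys)) = (\<Sum>x\<in>UNIV. q (x # butlast ys, last ys))"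
    proof (intro sum.cong refl)
      fix x
      show "p (x # butlast ys) * w (last ys) (x # butlast ys) = q (x # butlast ys, last ys)"
        using Lpos[OF mem[of x]] by (simp add: p_def w_def wq[OF mem[of x]])
    qed
    also have "\<dots> = Rq q ys" by (simp add: Rq_def)
    also have "\<dots> = Lq q ys" using qC ys by (simp add: CC_def)
    finally show "(\<Sum>x\<in>UNIV. p (x # butlast ys) * w (last ys) (x # butlast ys)) = p ys" by (simp add: p_def)
  qed
  have uniq: "first_marginal d p' x1 = r x1" if sp': "stationary d w p'" for p' x1
  proof -
    have eq: "\<forall>xs\<in>tuples d. p' xs = p xs" by (rule stat_unique[OF d1 wpos stat ppos sp'])
    have "first_marginal d p' x1 = (\<Sum>zs\<in>tuples (d-1). p (x1 # zs))"
      unfolding first_marginal_def using eq d1 by (intro sum.cong refl) (auto simp: tuples_def)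
    also have "\<dots> = fmq d q x1" by (simp add: fmq_def p_def)
    also have "\<dots> = r x1" using qC by (simp add: CC_def)
    finally show ?thesis .
  qed
  show ?thesis using inW stat uniq unfolding w_def by blast
qed

end

theorem theorem2:
  fixes H :: "'a::finite list \<Rightarrow> real" and r :: "'a \<Rightarrow> real" and d :: nat
  assumes "d \<ge> 1" and "pos_prob r"
  shows "\<exists>(\<kappa>::'a list \<Rightarrow> real) (\<delta>::'a \<Rightarrow> real).
           in_W d (exp_kernel H \<kappa> \<delta>) \<and>
           (\<exists>p. stationary d (exp_kernel H \<kappa> \<delta>) p) \<and>
           (\<forall>p. stationary d (exp_kernel H \<kappa> \<delta>) p \<longrightarrow>
                (\<forall>x1. first_marginal d p x1 = r x1))"
proof -
  interpret M d H r using assms by unfold_locales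
  show ?thesis by (rule main)
qed

end
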